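(* Let $G$ be a finite simple connected graph and let $\sigma$ be a position of the parallel chip-firing game on $G$ with period $p(\sigma)>1$. Then there exists $T\ge 0$ such that for all $t\ge T$ and all vertices $v\in V(G)$, $U^t\sigma(v)\le 2\deg(v)-1$.
   Context: Parallel chip-firing game: on a finite simple connected graph $G$, a position $\sigma$ assigns a nonnegative integer $\sigma(v)$ (number of chips) to each vertex $v$. In one step, every vertex $v$ with $\sigma(v)\ge \deg(v)$ (a "firing" vertex) simultaneously sends one chip to each neighbor; other vertices do not send chips. Writing $\Phi_\sigma(v)$ for the number of neighbors $w$ of $v$ with $\sigma(w)\ge\deg(w)$, the step operator $U$ is given by $U\sigma(v)=\sigma(v)+\Phi_\sigma(v)$ if $\sigma(v)\le \deg(v)-1$ and $U\sigma(v)=\sigma(v)+\Phi_\sigma(v)-\deg(v)$ if $\sigma(v)\ge\deg(v)$. $U^0\sigma=\sigma$, $U^m\sigma=U(U^{m-1}\sigma)$. The period $p(\sigma)$ is the least positive integer $p$ such that $U^{t+p}\sigma=U^t\sigma$ for all sufficiently large $t$. *)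

theory Defs
  imports Main
begin

definition simple_graph :: "'a set \<Rightarrow> ('a \<Rightarrow> 'a \<Rightarrow> bool) \<Rightarrow> bool" where
  "simple_graph V E \<longleftrightarrow> finite V \<and> (\<forall>u v. E u v \<longrightarrow> u \<in> V \<and> v \<in> V)
     \<and> (\<forall>u v. E u v \<longrightarrow> E v u) \<and> (\<forall>v. \<not> E v v)"

definition connected_graph :: "'a set \<Rightarrow> ('a \<Rightarrow> 'a \<Rightarrow> bool) \<Rightarrow> bool" where
  "connected_graph V E \<longleftrightarrow> (\<forall>u\<in>V. \<forall>v\<in>V. E\<^sup>*\<^sup>* u v)"

definition deg :: "'a set \<Rightarrow> ('a \<Rightarrow> 'a \<Rightarrow> bool) \<Rightarrow> 'a \<Rightarrow> nat" where
  "deg V E v = card {w \<in> V. E v w}"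

definition Phi :: "'a set \<Rightarrow> ('a \<Rightarrow> 'a \<Rightarrow> bool) \<Rightarrow> ('a \<Rightarrow> nat) \<Rightarrow> 'a \<Rightarrow> nat" where
  "Phi V E \<sigma> v = card {w \<in> V. E v w \<and> \<sigma> w \<ge> deg V E w}"

text \<open>Parallel chip-firing step operator (positions outside V are left unchanged,
  since there deg = 0 and Phi = 0).\<close>
definition U :: "'a set \<Rightarrow> ('a \<Rightarrow> 'a \<Rightarrow> bool) \<Rightarrow> ('a \<Rightarrow> nat) \<Rightarrow> ('a \<Rightarrow> nat)" where
  "U V E \<sigma> = (\<lambda>v. if \<sigma> v < deg V E v
                     then \<sigma> v + Phi V E \<sigma> v
                     else \<sigma> v + Phi V E \<sigma> v - deg V E v)"

definition period :: "'a set \<Rightarrow> ('a \<Rightarrow> 'a \<Rightarrow> bool) \<Rightarrow> ('a \<Rightarrow> nat) \<Rightarrow> nat" where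
  "period V E \<sigma> = (LEAST p. p > 0 \<and>
      (\<exists>T. \<forall>t\<ge>T. (U V E ^^ (t + p)) \<sigma> = (U V E ^^ t) \<sigma>))"

end

theory Submission
  imports Defs
begin

lemma Phi_le_deg:
  assumes "finite V"
  shows "Phi V E s v \<le> deg V E v"
  unfolding Phi_def deg_def using assms by (intro card_mono) auto

lemma Phi_le_deg_miss:
  assumes "finite V" "u \<in> V" "E v u" "\<not> s u \<ge> deg V E u"
  shows "Phi V E s v + 1 \<le> deg V E v"
proof -
  have "{w \<in> V. E v w \<and> s w \<ge> deg V E w} \<subseteq> {w \<in> V. E v w} - {u}"
    using assms by auto
  hence "Phi V E s v \<le> card ({w \<in> V. E v w} - {u})"
    unfolding Phi_def using assms by (intro card_mono) auto
  also have "\<dots> = deg V E v - 1" unfolding deg_def using assms by (simp add: card_Diff_singleton)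
  finally have a: "Phi V E s v \<le> deg V E v - 1" .
  have "deg V E v > 0" unfolding deg_def using assms by (subst card_gt_0_iff) auto
  with a show ?thesis by simp
qed

lemma funpow_Suc': "(f ^^ Suc n) x = f ((f ^^ n) x)" by simp

lemma neighbor_fires:
  assumes fin: "finite V" and uV: "u \<in> V" and Evu: "E v u"
    and fire: "\<forall>t\<ge>T. (U V E ^^ t) \<sigma> v \<ge> deg V E v"
  shows "\<exists>T'. \<forall>t\<ge>T'. (U V E ^^ t) \<sigma> u \<ge> deg V E u"
proof (rule ccontr)
  define s where "s t = (U V E ^^ t) \<sigma>" for t
  define nf where "nf t = (\<not> s t u \<ge> deg V E u)" for t
  assume "\<not> ?thesis"
  hence inf: "\<forall>T'. \<exists>t\<ge>T'. nf t" unfolding nf_def s_def by (auto simp: not_le)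
  have step: "s (Suc t) v + (if nf t then 1 else 0) \<le> s t v" if "t \<ge> T" for t
  proof -
    have f: "s t v \<ge> deg V E v" using fire that unfolding s_def by auto
    have sS: "s (Suc t) = U V E (s t)" unfolding s_def by simp
    have "s (Suc t) v = s t v + Phi V E (s t) v - deg V E v"
      unfolding sS U_def using f by simp
    moreover have "Phi V E (s t) v \<le> deg V E v" by (rule Phi_le_deg[OF fin])
    moreover have "nf t \<Longrightarrow> Phi V E (s t) v + 1 \<le> deg V E v"
      unfolding nf_def by (rule Phi_le_deg_miss[where E=E and v=v, OF fin uV Evu])
    ultimately show ?thesis using f
    proof (cases "nf t")
      case True
      then show ?thesis using \<open>s (Suc t) v = _\<close> \<open>nf t \<Longrightarrow> _\<close> f by simp
    next
      case False
      then show ?thesis using \<open>s (Suc t) v = _\<close> \<open>Phi V E (s t) v \<le> _\<close> f by simp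
    qed
  qed
  have bound: "s (T+k) v + card {i. i < k \<and> nf (T+i)} \<le> s T v" for k
  proof (induction k)
    case 0 then show ?case by simp
  next
    case (Suc k)
    have st: "s (Suc (T+k)) v + (if nf (T+k) then 1 else 0) \<le> s (T+k) v"
      by (rule step) simp
    show ?case
    proof (cases "nf (T+k)")
      case True
      have "{i. i < Suc k \<and> nf (T+i)} = insert k {i. i < k \<and> nf (T+i)}"
        using True by (auto simp: less_Suc_eq)
      hence "card {i. i < Suc k \<and> nf (T+i)} = Suc (card {i. i < k \<and> nf (T+i)})"
        by simp
      then show ?thesis using Suc.IH st True by simp
    next
      case False
      have "{i. i < Suc k \<and> nf (T+i)} = {i. i < k \<and> nf (T+i)}"
        using False by (auto simp: less_Suc_eq)
      then show ?thesis using Suc.IH st False by simp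
    qed
  qed
  have unb: "\<exists>k. card {i. i < k \<and> nf (T+i)} \<ge> n" for n
  proof (induction n)
    case 0 then show ?case by simp
  next
    case (Suc n)
    then obtain k where k: "card {i. i < k \<and> nf (T+i)} \<ge> n" by blast
    obtain t where t: "t \<ge> T + k" "nf t" using inf by blast
    define i where "i = t - T"
    have "insert i {i. i < k \<and> nf (T+i)} \<subseteq> {j. j < Suc i \<and> nf (T+j)}"
      using t i_def by auto
    moreover have "i \<notin> {i. i < k \<and> nf (T+i)}" using t i_def by auto
    ultimately have "card {j. j < Suc i \<and> nf (T+j)} \<ge> Suc n"
    proof -
      have "card (insert i {i. i < k \<and> nf (T+i)}) = Suc (card {i. i < k \<and> nf (T+i)})"
        using \<open>i \<notin> _\<close> by (intro card_insert_disjoint) auto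
      moreover have "card (insert i {i. i < k \<and> nf (T+i)}) \<le> card {j. j < Suc i \<and> nf (T+j)}"
        using \<open>insert i _ \<subseteq> _\<close> by (intro card_mono) auto
      ultimately show ?thesis using k by simp
    qed
    then show ?case by blast
  qed
  obtain k where "card {i. i < k \<and> nf (T+i)} \<ge> Suc (s T v)" using unb by blast
  with bound[of k] show False by simp
qed

lemma finite_eventually:
  fixes P :: "nat \<Rightarrow> 'b \<Rightarrow> bool"
  assumes "finite A" "\<forall>w\<in>A. \<exists>T. \<forall>t\<ge>T. P t w"
  shows "\<exists>T. \<forall>t\<ge>T. \<forall>w\<in>A. P t w"
  using assms
proof (induction A rule: finite_induct)
  case empty then show ?case by simp
next
  case (insert x F)
  then obtain T1 where T1: "\<forall>t\<ge>T1. \<forall>w\<in>F. P t w" by auto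
  obtain T2 where T2: "\<forall>t\<ge>T2. P t x" using insert by auto
  have "\<forall>t\<ge>max T1 T2. \<forall>a\<in>insert x F. P t a"
  proof (intro allI impI ballI)
    fix t a assume "max T1 T2 \<le> t" "a \<in> insert x F"
    then show "P t a" using T1 T2 by (cases "a = x") auto
  qed
  then show ?case by blast
qed

theorem lemma2p1:
  fixes V :: "'a set" and E :: "'a \<Rightarrow> 'a \<Rightarrow> bool" and \<sigma> :: "'a \<Rightarrow> nat"
  assumes "simple_graph V E" and "connected_graph V E"
    and "period V E \<sigma> > 1"
  shows "\<exists>T. \<forall>t\<ge>T. \<forall>v\<in>V. (U V E ^^ t) \<sigma> v \<le> 2 * deg V E v - 1"
proof -
  define s where "s t = (U V E ^^ t) \<sigma>" for t
  have fin: "finite V" and EV: "\<And>u v. E u v \<Longrightarrow> u \<in> V \<and> v \<in> V"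
    using assms(1) unfolding simple_graph_def by auto
  have sSuc: "s (Suc t) = U V E (s t)" for t unfolding s_def by simp
  have nofire: "\<exists>t. s t v < deg V E v" if vV: "v \<in> V" for v
  proof (rule ccontr)
    assume "\<not> ?thesis"
    hence fv: "\<forall>t\<ge>0. s t v \<ge> deg V E v" by (auto simp: not_less)
    have ev: "\<exists>T. \<forall>t\<ge>T. s t w \<ge> deg V E w" if "E\<^sup>*\<^sup>* v w" for w
      using that
    proof (induction rule: rtranclp_induct)
      case base then show ?case using fv by blast
    next
      case (step y z)
      then obtain T where "\<forall>t\<ge>T. s t y \<ge> deg V E y" by blast
      hence "\<forall>t\<ge>T. (U V E ^^ t) \<sigma> y \<ge> deg V E y" unfolding s_def .
      from neighbor_fires[OF fin _ step(2) this] EV[OF step(2)]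
      show ?case unfolding s_def by blast
    qed
    have "\<forall>w\<in>V. \<exists>T. \<forall>t\<ge>T. s t w \<ge> deg V E w"
    proof
      fix w assume "w \<in> V"
      hence "E\<^sup>*\<^sup>* v w" using assms(2) vV unfolding connected_graph_def by simp
      thus "\<exists>T. \<forall>t\<ge>T. s t w \<ge> deg V E w" by (rule ev)
    qed
    from finite_eventually[OF fin this]
    obtain T where T: "\<forall>t\<ge>T. \<forall>w\<in>V. s t w \<ge> deg V E w" by (elim exE)
    have fix1: "s (Suc t) = s t" if "t \<ge> T" for t
    proof
      fix w
      show "s (Suc t) w = s t w"
      proof (cases "w \<in> V")
        case True
        have "{x \<in> V. E w x \<and> s t x \<ge> deg V E x} = {x \<in> V. E w x}" using T that by auto
        hence "Phi V E (s t) w = deg V E w" unfolding Phi_def deg_def by simp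
        moreover have "s t w \<ge> deg V E w" using T that True by blast
        ultimately show ?thesis unfolding sSuc U_def by simp
      next
        case False
        hence e1: "{x \<in> V. E w x} = {}" and e2: "{x \<in> V. E w x \<and> s t x \<ge> deg V E x} = {}" using EV by auto
        have "deg V E w = 0" unfolding deg_def e1 by simp
        moreover have "Phi V E (s t) w = 0" unfolding Phi_def e2 by simp
        ultimately show ?thesis unfolding sSuc U_def by simp
      qed
    qed
    have "\<forall>t\<ge>T. (U V E ^^ (t + 1)) \<sigma> = (U V E ^^ t) \<sigma>"
      using fix1 unfolding s_def by simp
    hence "(1::nat) > 0 \<and> (\<exists>T. \<forall>t\<ge>T. (U V E ^^ (t + 1)) \<sigma> = (U V E ^^ t) \<sigma>)" by blast
    hence "period V E \<sigma> \<le> 1" unfolding period_def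
      by (rule Least_le)
    with assms(3) show False by simp
  qed
  have inv1: "s (Suc t) w \<le> 2 * deg V E w - 1" if "s t w \<le> 2 * deg V E w - 1" for t w
  proof -
    have P: "Phi V E (s t) w \<le> deg V E w" by (rule Phi_le_deg[OF fin])
    have eq: "s (Suc t) w = (if s t w < deg V E w then s t w + Phi V E (s t) w
                     else s t w + Phi V E (s t) w - deg V E w)" unfolding sSuc U_def by (rule refl)
    show ?thesis
    proof (cases "s t w < deg V E w")
      case True then show ?thesis using P eq by simp
    next
      case False then show ?thesis using P eq that by simp
    qed
  qed
  have inv: "s (t0 + k) w \<le> 2 * deg V E w - 1" if h: "s t0 w \<le> 2 * deg V E w - 1" for t0 k w
  proof (induction k)
    case 0 then show ?case using h by simp
  next
    case (Suc k)
    then show ?case using inv1[of "t0 + k" w] by simp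
  qed
  have "\<forall>w\<in>V. \<exists>T. \<forall>t\<ge>T. s t w \<le> 2 * deg V E w - 1"
  proof
    fix w assume wV: "w \<in> V"
    obtain t0 where t0: "s t0 w < deg V E w" using nofire wV by blast
    hence h0: "s t0 w \<le> 2 * deg V E w - 1" by simp
    have "\<forall>t\<ge>t0. s t w \<le> 2 * deg V E w - 1"
    proof (intro allI impI)
      fix t assume "t0 \<le> t"
      then obtain k where "t = t0 + k" using le_Suc_ex by blast
      then show "s t w \<le> 2 * deg V E w - 1" using inv[OF h0] by simp
    qed
    thus "\<exists>T. \<forall>t\<ge>T. s t w \<le> 2 * deg V E w - 1" by blast
  qed
  from finite_eventually[OF fin this] show ?thesis unfolding s_def .
qed

end
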